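(* Let $K$ be a field of characteristic $0$, $n\ge2$, and $f\in K[[x_1,\dots,x_n]]$. Let $T=x_1D_{x_1}-x_2D_{x_2}$ act on $K[[x_1,\dots,x_n]]$ with $D_{x_i}=\partial/\partial x_i$. Then there exists $s\in\mathbb N$ with $T^s(f)=0$ if and only if there exists a power series $g\in K[[y_1,\dots,y_{n-1}]]$ in $n-1$ variables such that $f(x_1,\dots,x_n)=g(x_1x_2,x_3,\dots,x_n)$. *)

theory Defs
  imports Main
begin

text \<open>Formal power series in n variables x_1..x_n over a ring 'a, represented by
their coefficient functions on exponent vectors alpha :: nat => nat (variable x_(i+1)
has index i).\<close>

type_synonym 'a mps = "(nat \<Rightarrow> nat) \<Rightarrow> 'a"

definition mps :: "nat \<Rightarrow> ('a::zero) mps set" where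
  "mps n = {f. \<forall>\<alpha>. (\<exists>i\<ge>n. \<alpha> i \<noteq> 0) \<longrightarrow> f \<alpha> = 0}"

definition mps_deriv :: "nat \<Rightarrow> ('a::semiring_1) mps \<Rightarrow> 'a mps" where
  "mps_deriv i f = (\<lambda>\<alpha>. of_nat (\<alpha> i + 1) * f (\<alpha>(i := \<alpha> i + 1)))"

definition mps_mulx :: "nat \<Rightarrow> ('a::zero) mps \<Rightarrow> 'a mps" where
  "mps_mulx i f = (\<lambda>\<alpha>. if \<alpha> i = 0 then 0 else f (\<alpha>(i := \<alpha> i - 1)))"

definition opT :: "('a::ring_1) mps \<Rightarrow> 'a mps" where
  "opT f = (\<lambda>\<alpha>. mps_mulx 0 (mps_deriv 0 f) \<alpha> - mps_mulx 1 (mps_deriv 1 f) \<alpha>)"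

text \<open>Monomial substitution: for g in variables y_1..y_(n-1), the series
g(x_1 x_2, x_3, ..., x_n).  The monomial y^beta maps to
(x_1 x_2)^(beta_1) x_3^(beta_2) ... x_n^(beta_(n-1)), so the coefficient at alpha is
g_beta if alpha_1 = alpha_2 = beta_1 and alpha_(j+1) = beta_j (j >= 2), and 0 otherwise.\<close>
definition subst_x1x2 :: "('a::zero) mps \<Rightarrow> 'a mps" where
  "subst_x1x2 g = (\<lambda>\<alpha>. if \<alpha> 0 = \<alpha> 1
      then g (\<lambda>j. if j = 0 then \<alpha> 0 else \<alpha> (j + 1)) else 0)"

end

theory Submission
  imports Defs
begin

lemma mulx_deriv: "mps_mulx i (mps_deriv i f) \<alpha> = of_nat (\<alpha> i) * (f \<alpha> :: 'a::ring_1)"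
proof (cases "\<alpha> i = 0")
  case True thus ?thesis by (simp add: mps_mulx_def)
next
  case False
  hence "(\<alpha>(i := \<alpha> i - 1))(i := \<alpha> i - 1 + 1) = \<alpha>" by auto
  with False show ?thesis by (simp add: mps_mulx_def mps_deriv_def)
qed

lemma opT_eq: "opT f = (\<lambda>\<alpha>. (of_nat (\<alpha> 0) - of_nat (\<alpha> 1)) * (f \<alpha> :: 'a::ring_1))"
  by (rule ext) (simp add: opT_def mulx_deriv algebra_simps)

lemma opT_pow: "(opT ^^ s) f = (\<lambda>\<alpha>. (of_nat (\<alpha> 0) - of_nat (\<alpha> 1)) ^ s * (f \<alpha> :: 'a::ring_1))"
  by (induction s) (simp_all add: opT_eq mult.assoc)

lemma t2: fixes f :: "('a::field_char_0) mps" assumes "n \<ge> 2" "f \<in> mps n"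
  shows "(\<lambda>\<beta>::nat\<Rightarrow>nat. f (\<lambda>j. if j = 0 then \<beta> 0 else if j = 1 then \<beta> 0 else \<beta> (j - 1))) \<in> mps (n - 1)"
proof -
  have F: "\<And>\<alpha> i. i \<ge> n \<Longrightarrow> \<alpha> i \<noteq> 0 \<Longrightarrow> f \<alpha> = 0" using assms(2) unfolding mps_def by blast
  show ?thesis unfolding mps_def
  proof (intro CollectI allI impI)
    fix \<beta> :: "nat \<Rightarrow> nat" assume "\<exists>i\<ge>n - 1. \<beta> i \<noteq> 0"
    then obtain i where i: "n - 1 \<le> i" "\<beta> i \<noteq> 0" by blast
    have "(\<lambda>j. if j = 0 then \<beta> 0 else if j = 1 then \<beta> 0 else \<beta> (j - 1)) (i+1) \<noteq> 0"
      using i assms(1) by auto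
    moreover have "i + 1 \<ge> n" using i assms(1) by auto
    ultimately show "f (\<lambda>j. if j = 0 then \<beta> 0 else if j = 1 then \<beta> 0 else \<beta> (j - 1)) = 0"
      by (rule F[rotated])
  qed
qed
lemma t3: fixes f :: "('a::field_char_0) mps" assumes supp: "\<And>\<alpha>. \<alpha> 0 \<noteq> \<alpha> 1 \<Longrightarrow> f \<alpha> = 0"
  shows "f = subst_x1x2 (\<lambda>\<beta>::nat\<Rightarrow>nat. f (\<lambda>j. if j = 0 then \<beta> 0 else if j = 1 then \<beta> 0 else \<beta> (j - 1)))"
  proof
    fix \<alpha> :: "nat \<Rightarrow> nat"
    show "f \<alpha> = subst_x1x2 (\<lambda>\<beta>::nat\<Rightarrow>nat. f (\<lambda>j. if j = 0 then \<beta> 0 else if j = 1 then \<beta> 0 else \<beta> (j - 1))) \<alpha>"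
    proof (cases "\<alpha> 0 = \<alpha> 1")
      case True
      let ?b = "\<lambda>j::nat. if j = 0 then \<alpha> 0 else \<alpha> (j + 1)"
      have e: "(\<lambda>j. if j = 0 then ?b 0 else if j = 1 then ?b 0 else ?b (j - 1)) = \<alpha>"
      proof
        fix j show "(if j = 0 then ?b 0 else if j = 1 then ?b 0 else ?b (j - 1)) = \<alpha> j"
          using True by (cases j) auto
      qed
      have "subst_x1x2 (\<lambda>\<beta>::nat\<Rightarrow>nat. f (\<lambda>j. if j = 0 then \<beta> 0 else if j = 1 then \<beta> 0 else \<beta> (j - 1))) \<alpha>
          = f (\<lambda>j. if j = 0 then ?b 0 else if j = 1 then ?b 0 else ?b (j - 1))"
        by (simp add: subst_x1x2_def True)
      thus ?thesis by (simp only: e)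
    qed (simp add: subst_x1x2_def supp)
  qed
theorem lemma3p7:
  fixes f :: "('a::field_char_0) mps" and n :: nat
  assumes "n \<ge> 2" and "f \<in> mps n"
  shows "(\<exists>s::nat. (opT ^^ s) f = (\<lambda>_. 0)) \<longleftrightarrow>
         (\<exists>g \<in> mps (n - 1). f = subst_x1x2 g)"
proof
  assume "\<exists>s::nat. (opT ^^ s) f = (\<lambda>_. 0)"
  then obtain s where s: "(opT ^^ s) f = (\<lambda>_. 0)" by blast
  have supp: "f \<alpha> = 0" if "\<alpha> 0 \<noteq> \<alpha> 1" for \<alpha>
  proof -
    have "(of_nat (\<alpha> 0) - of_nat (\<alpha> 1)) ^ s * f \<alpha> = 0"
      using fun_cong[OF s, of \<alpha>] by (simp add: opT_pow)
    moreover have "(of_nat (\<alpha> 0) - of_nat (\<alpha> 1) :: 'a) \<noteq> 0" using that by simp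
    ultimately show ?thesis by simp
  qed
  show "\<exists>g \<in> mps (n - 1). f = subst_x1x2 g"
    using t2[OF assms] t3[of f, OF supp] by blast
next
  assume "\<exists>g \<in> mps (n - 1). f = subst_x1x2 g"
  then obtain g where g: "f = subst_x1x2 g" by blast
  have "(opT ^^ 1) f = (\<lambda>_. 0)"
    by (rule ext) (simp add: opT_eq g subst_x1x2_def)
  thus "\<exists>s::nat. (opT ^^ s) f = (\<lambda>_. 0)" by blast
qed

end
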